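(* There is a constant $C>0$ such that for every 1-2-metric on $n\ge2$ points and every $\alpha>0$, the greedy-routing network creation game on it with edge price $\alpha$ has a $(C\max\{1,\log n\})$-approximate Nash equilibrium.
   Context: A 1-2-metric is a finite metric space $(\mathcal{P},d)$ with $d(u,v)\in\{1,2\}$ for all distinct $u,v$. Game: agents are the points of $\mathcal{P}$; agent $u$'s strategy is $S_u\subseteq\mathcal{P}\setminus\{u\}$; a profile $\mathbf{s}$ defines the directed network with arcs $(u,v)$, $v\in S_u$, of length $d(u,v)$; $(S'_u,\mathbf{s}_{-u})$ is $\mathbf{s}$ with $S_u$ replaced by $S'_u$. A greedy path from $u$ to $v$ is a directed path $u=x_1,\dots,x_j=v$ of arcs with $d(x_i,v)>d(x_{i+1},v)$ for all $i$. $\mathrm{stretch}(u,v)$ is the minimum length of a greedy path from $u$ to $v$ divided by $d(u,v)$, or a fixed sufficiently large penalty constant $Z$ if none exists. Cost: $c_u(\mathbf{s})=\sum_{v\ne u}\mathrm{stretch}(u,v)+\alpha|S_u|$. For $\beta\ge1$, a $\beta$-approximate Nash equilibrium is a profile $\mathbf{s}$ with $c_u(S'_u,\mathbf{s}_{-u})\ge c_u(\mathbf{s})/\beta$ for every agent $u$ and every $S'_u\subseteq\mathcal{P}\setminus\{u\}$. *)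

theory Defs
  imports Complex_Main
begin

definition one_two_metric :: "'a set \<Rightarrow> ('a \<Rightarrow> 'a \<Rightarrow> real) \<Rightarrow> bool" where
  "one_two_metric P d \<longleftrightarrow> finite P \<and>
     (\<forall>u\<in>P. d u u = 0) \<and>
     (\<forall>u\<in>P. \<forall>v\<in>P. d u v = d v u) \<and>
     (\<forall>u\<in>P. \<forall>v\<in>P. \<forall>w\<in>P. d u w \<le> d u v + d v w) \<and>
     (\<forall>u\<in>P. \<forall>v\<in>P. u \<noteq> v \<longrightarrow> d u v \<in> {1, 2})"

text \<open>A strategy profile: each agent u in P buys a set of arcs to other points of P.\<close>
definition valid_profile :: "'a set \<Rightarrow> ('a \<Rightarrow> 'a set) \<Rightarrow> bool" where
  "valid_profile P s \<longleftrightarrow> (\<forall>u\<in>P. s u \<subseteq> P - {u})"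

definition greedy_path ::
  "'a set \<Rightarrow> ('a \<Rightarrow> 'a \<Rightarrow> real) \<Rightarrow> ('a \<Rightarrow> 'a set) \<Rightarrow> 'a \<Rightarrow> 'a \<Rightarrow> 'a list \<Rightarrow> bool" where
  "greedy_path P d s u v xs \<longleftrightarrow> xs \<noteq> [] \<and> hd xs = u \<and> last xs = v \<and> set xs \<subseteq> P \<and>
     (\<forall>i. Suc i < length xs \<longrightarrow>
        xs ! Suc i \<in> s (xs ! i) \<and> d (xs ! i) v > d (xs ! Suc i) v)"

definition path_length :: "('a \<Rightarrow> 'a \<Rightarrow> real) \<Rightarrow> 'a list \<Rightarrow> real" where
  "path_length d xs = (\<Sum>i<length xs - 1. d (xs ! i) (xs ! Suc i))"

definition stretch ::
  "real \<Rightarrow> 'a set \<Rightarrow> ('a \<Rightarrow> 'a \<Rightarrow> real) \<Rightarrow> ('a \<Rightarrow> 'a set) \<Rightarrow> 'a \<Rightarrow> 'a \<Rightarrow> real" where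
  "stretch Z P d s u v =
     (if \<exists>xs. greedy_path P d s u v xs
      then (INF xs\<in>{xs. greedy_path P d s u v xs}. path_length d xs) / d u v
      else Z)"

definition agent_cost ::
  "real \<Rightarrow> real \<Rightarrow> 'a set \<Rightarrow> ('a \<Rightarrow> 'a \<Rightarrow> real) \<Rightarrow> ('a \<Rightarrow> 'a set) \<Rightarrow> 'a \<Rightarrow> real" where
  "agent_cost Z \<alpha> P d s u = (\<Sum>v\<in>P - {u}. stretch Z P d s u v) + \<alpha> * real (card (s u))"

definition approx_NE ::
  "real \<Rightarrow> real \<Rightarrow> real \<Rightarrow> 'a set \<Rightarrow> ('a \<Rightarrow> 'a \<Rightarrow> real) \<Rightarrow> ('a \<Rightarrow> 'a set) \<Rightarrow> bool" where
  "approx_NE \<beta> Z \<alpha> P d s \<longleftrightarrow> valid_profile P s \<and>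
     (\<forall>u\<in>P. \<forall>S'. S' \<subseteq> P - {u} \<longrightarrow>
        agent_cost Z \<alpha> P d (s(u := S')) u \<ge> agent_cost Z \<alpha> P d s u / \<beta>)"

end

theory Submission
  imports Defs
begin

lemma m_vals:
  assumes "one_two_metric P d" "a \<in> P" "b \<in> P"
  shows "(a = b \<and> d a b = 0) \<or> (a \<noteq> b \<and> (d a b = 1 \<or> d a b = 2))"
  using assms unfolding one_two_metric_def by (cases "a = b") auto

lemma chain_lt:
  assumes "\<forall>i. Suc i < length xs \<longrightarrow> (f (xs!Suc i) :: real) < f (xs!i)"
  shows "0 < k \<Longrightarrow> k < length xs \<Longrightarrow> f (xs!k) < f (xs!0)"
proof (induction k)
  case 0 then show ?case by simp
next
  case (Suc k)
  show ?case
  proof (cases "k = 0")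
    case True then show ?thesis using assms Suc.prems by auto
  next
    case False
    then have "f (xs!k) < f (xs!0)" using Suc by auto
    moreover have "f (xs!Suc k) < f (xs!k)" using assms Suc.prems by auto
    ultimately show ?thesis by linarith
  qed
qed

lemma greedy_transfer:
  assumes M: "one_two_metric P d" and u: "u \<in> P" and v: "v \<in> P"
    and eq: "s' u = s u"
    and hN: "\<forall>w\<in>P-{u}. \<forall>x\<in>P. d w x = 1 \<longrightarrow> x \<in> s' w"
    and gp: "greedy_path P d s u v xs"
  shows "greedy_path P d s' u v xs"
proof -
  have ne: "xs \<noteq> []" and hd: "hd xs = u" and lst: "last xs = v" and sP: "set xs \<subseteq> P"
    and st: "\<forall>i. Suc i < length xs \<longrightarrow> xs ! Suc i \<in> s (xs ! i) \<and> d (xs ! i) v > d (xs ! Suc i) v"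
    using gp unfolding greedy_path_def by auto
  have x0: "xs ! 0 = u" using ne hd by (simp add: hd_conv_nth)
  have dec: "\<forall>i. Suc i < length xs \<longrightarrow> (\<lambda>x. d x v) (xs!Suc i) < (\<lambda>x. d x v) (xs!i)"
    using st by auto
  have "xs ! Suc i \<in> s' (xs ! i)" if i: "Suc i < length xs" for i
  proof (cases "i = 0")
    case True then show ?thesis using st i x0 eq by auto
  next
    case False
    have c1: "d (xs!i) v < d u v" using chain_lt[OF dec, of i] False i x0 by auto
    have c2: "d (xs!Suc i) v < d (xs!i) v" using st i by auto
    have pi: "xs!i \<in> P" using sP i by auto
    have psi: "xs!Suc i \<in> P" using sP i by auto
    have "d u v \<le> 2" using m_vals[OF M u v] by auto
    then have "d (xs!i) v = 1 \<and> d (xs!Suc i) v = 0"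
      using m_vals[OF M pi v] m_vals[OF M psi v] c1 c2 by auto
    then have e: "xs!Suc i = v" and d1: "d (xs!i) v = 1" using m_vals[OF M psi v] by auto
    have "xs!i \<noteq> u" using c1 d1 by auto
    then show ?thesis using hN pi e d1 v by auto
  qed
  then show ?thesis unfolding greedy_path_def using ne hd lst sP st by auto
qed

lemma stretch_eq:
  assumes M: "one_two_metric P d" and u: "u \<in> P" and v: "v \<in> P"
    and eq: "s' u = s u"
    and hN: "\<forall>w\<in>P-{u}. \<forall>x\<in>P. d w x = 1 \<longrightarrow> x \<in> s' w"
    and hN': "\<forall>w\<in>P-{u}. \<forall>x\<in>P. d w x = 1 \<longrightarrow> x \<in> s w"
  shows "stretch Z P d s u v = stretch Z P d s' u v"
proof -
  have "{xs. greedy_path P d s u v xs} = {xs. greedy_path P d s' u v xs}"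
    using greedy_transfer[where s=s and s'=s', OF M u v eq hN] greedy_transfer[where s=s' and s'=s, OF M u v eq[symmetric] hN'] by auto
  then show ?thesis unfolding stretch_def by (metis (no_types, lifting) mem_Collect_eq)
qed

lemma cost_eq:
  assumes M: "one_two_metric P d" and u: "u \<in> P"
    and eq: "s' u = s u"
    and hN: "\<forall>w\<in>P-{u}. \<forall>x\<in>P. d w x = 1 \<longrightarrow> x \<in> s' w"
    and hN': "\<forall>w\<in>P-{u}. \<forall>x\<in>P. d w x = 1 \<longrightarrow> x \<in> s w"
  shows "agent_cost Z \<alpha> P d s u = agent_cost Z \<alpha> P d s' u"
  unfolding agent_cost_def using stretch_eq[OF M u _ eq hN hN'] eq
  by (metis (no_types, lifting) DiffD1 sum.cong)

lemma path_length_nonneg: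
  assumes M: "one_two_metric P d" and "set xs \<subseteq> P"
  shows "path_length d xs \<ge> 0"
  unfolding path_length_def
proof (rule sum_nonneg)
  fix i assume "i \<in> {..<length xs - 1}"
  then have "xs!i \<in> P" "xs!Suc i \<in> P" using assms(2) by auto
  then show "d (xs!i) (xs!Suc i) \<ge> 0" using m_vals[OF M] by fastforce
qed

lemma stretch_nonneg:
  assumes M: "one_two_metric P d" and u: "u \<in> P" and v: "v \<in> P" and Z: "Z \<ge> 0"
  shows "stretch Z P d s u v \<ge> 0"
proof (cases "\<exists>xs. greedy_path P d s u v xs")
  case True
  have "(INF xs\<in>{xs. greedy_path P d s u v xs}. path_length d xs) \<ge> 0"
    apply (rule cINF_greatest)
    using True apply auto[1]
    using path_length_nonneg[OF M] unfolding greedy_path_def by auto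
  moreover have "d u v \<ge> 0" using m_vals[OF M u v] by auto
  ultimately show ?thesis using True unfolding stretch_def by auto
next
  case False then show ?thesis using Z unfolding stretch_def by auto
qed

lemma stretch_le1:
  assumes M: "one_two_metric P d" and u: "u \<in> P" and v: "v \<in> P" and uv: "u \<noteq> v"
    and vs: "v \<in> s u"
  shows "stretch Z P d s u v \<le> 1"
proof -
  have duv: "d u v > 0" using m_vals[OF M u v] uv by auto
  have dvv: "d v v = 0" using m_vals[OF M v v] by auto
  have gp: "greedy_path P d s u v [u, v]"
    unfolding greedy_path_def using u v vs duv dvv
    by (auto simp: less_Suc_eq)
  have pl: "path_length d [u,v] = d u v" unfolding path_length_def by simp
  have bdd: "bdd_below (path_length d ` {xs. greedy_path P d s u v xs})"
    by (rule bdd_belowI[of _ 0]) (use path_length_nonneg[OF M] in \<open>auto simp: greedy_path_def\<close>)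
  have "(INF xs\<in>{xs. greedy_path P d s u v xs}. path_length d xs) \<le> d u v"
    using cINF_lower[OF bdd, of "[u,v]"] gp pl by auto
  then show ?thesis using gp duv unfolding stretch_def by auto
qed

lemma stretch_Z:
  assumes M: "one_two_metric P d" and u: "u \<in> P" and v: "v \<in> P"
    and d1: "d u v = 1" and vs: "v \<notin> s u"
  shows "stretch Z P d s u v = Z"
proof -
  have "\<not> greedy_path P d s u v xs" for xs
  proof
    assume gp: "greedy_path P d s u v xs"
    have uv: "u \<noteq> v" using d1 m_vals[OF M u v] by auto
    have ne: "xs \<noteq> []" and hd: "hd xs = u" and lst: "last xs = v" and sP: "set xs \<subseteq> P"
      and st: "\<forall>i. Suc i < length xs \<longrightarrow> xs ! Suc i \<in> s (xs ! i) \<and> d (xs ! i) v > d (xs ! Suc i) v"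
      using gp unfolding greedy_path_def by auto
    have x0: "xs ! 0 = u" using ne hd by (simp add: hd_conv_nth)
    have "length xs \<noteq> 1"
    proof
      assume "length xs = 1"
      then have "last xs = xs ! 0" using ne by (simp add: last_conv_nth)
      then show False using x0 lst uv by simp
    qed
    then have l: "Suc 0 < length xs" using ne by (cases xs) auto
    have a: "xs!1 \<in> s u" "d (xs!1) v < 1" using st l x0 d1 by auto
    have "xs!1 \<in> P" using sP l by auto
    then have "xs!1 = v" using m_vals[OF M _ v] a by fastforce
    then show False using a vs by simp
  qed
  then show ?thesis unfolding stretch_def by auto
qed

theorem theorem2p14:
  shows "\<exists>C::real. C > 0 \<and>
    (\<forall>(P :: 'a set) (d :: 'a \<Rightarrow> 'a \<Rightarrow> real) (\<alpha> :: real).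
       one_two_metric P d \<longrightarrow> card P \<ge> 2 \<longrightarrow> \<alpha> > 0 \<longrightarrow>
       (\<exists>Z0::real. \<forall>Z\<ge>Z0.
          \<exists>s. approx_NE (C * max 1 (ln (real (card P)))) Z \<alpha> P d s))"
proof (rule exI[of _ 1], intro conjI allI impI)
  fix P :: "'a set" and d :: "'a \<Rightarrow> 'a \<Rightarrow> real" and \<alpha> :: real
  assume M: "one_two_metric P d" and n2: "card P \<ge> 2" and a0: "\<alpha> > 0"
  have fin: "finite P" using M unfolding one_two_metric_def by auto
  define n where "n = real (card P)"
  define \<beta> where "\<beta> = 1 * max 1 (ln (real (card P)))"
  have b1: "\<beta> \<ge> 1" unfolding \<beta>_def by simp
  show "\<exists>Z0::real. \<forall>Z\<ge>Z0. \<exists>s. approx_NE \<beta> Z \<alpha> P d s"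
  proof (rule exI[of _ "n * (1 + \<alpha>) + 1"], intro allI impI)
    fix Z assume Z: "Z \<ge> n * (1 + \<alpha>) + 1"
    have Z0: "Z \<ge> 0" using Z a0 unfolding n_def
      by (smt (verit) mult_nonneg_nonneg of_nat_0_le_iff)
    define s0 where "s0 = (\<lambda>w. {x\<in>P. d w x = 1})"
    define f where "f = (\<lambda>w T. agent_cost Z \<alpha> P d (s0(w := T)) w)"
    define A where "A = (\<lambda>w. {T. s0 w \<subseteq> T \<and> T \<subseteq> P - {w}})"
    have "\<exists>T. T \<in> A w \<and> (\<forall>T'\<in>A w. f w T \<le> f w T')" if w: "w \<in> P" for w
    proof -
      have fA: "finite (A w)" unfolding A_def using fin by (auto intro: finite_subset)
      have "s0 w \<subseteq> P - {w}" unfolding s0_def using m_vals[OF M w] w by fastforce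
      then have neA: "A w \<noteq> {}" unfolding A_def by auto
      have "Min (f w ` A w) \<in> f w ` A w" using Min_in[of "f w ` A w"] fA neA by auto
      then obtain T where "T \<in> A w" "f w T = Min (f w ` A w)" by auto
      then show ?thesis using fA by auto
    qed
    then obtain S where S: "\<forall>w\<in>P. S w \<in> A w \<and> (\<forall>T'\<in>A w. f w (S w) \<le> f w T')"
      by metis
    have SN: "\<forall>w\<in>P-{u}. \<forall>x\<in>P. d w x = 1 \<longrightarrow> x \<in> (S(u:=T)) w" for u T
      using S unfolding A_def s0_def by auto
    have s0N: "\<forall>w\<in>P-{u}. \<forall>x\<in>P. d w x = 1 \<longrightarrow> x \<in> (s0(u:=T)) w" for u T
      unfolding s0_def by auto
    have cS: "agent_cost Z \<alpha> P d (S(u:=T)) u = f u T" if "u \<in> P" for u T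
      unfolding f_def by (rule cost_eq[OF M that _ s0N SN]) simp
    have costnn: "agent_cost Z \<alpha> P d s u \<ge> 0" if "u \<in> P" for s u
      unfolding agent_cost_def using stretch_nonneg[OF M that _ Z0] a0
      by (intro add_nonneg_nonneg sum_nonneg) auto
    show "\<exists>s. approx_NE \<beta> Z \<alpha> P d s"
    proof (rule exI[of _ S])
      show "approx_NE \<beta> Z \<alpha> P d S"
        unfolding approx_NE_def valid_profile_def
      proof (intro conjI ballI allI impI)
        fix u assume "u \<in> P" then show "S u \<subseteq> P - {u}" using S unfolding A_def by auto
      next
        fix u S' assume u: "u \<in> P" and S': "S' \<subseteq> P - {u}"
        have cur: "agent_cost Z \<alpha> P d S u = f u (S u)"
          using cS[OF u, of "S u"] by simp
        have cnn: "agent_cost Z \<alpha> P d S u \<ge> 0" using costnn[OF u] .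
        have div: "agent_cost Z \<alpha> P d S u / \<beta> \<le> agent_cost Z \<alpha> P d S u"
          using cnn b1 by (simp add: divide_le_eq mult_le_cancel_left1)
        show "agent_cost Z \<alpha> P d S u / \<beta> \<le> agent_cost Z \<alpha> P d (S(u := S')) u"
        proof (cases "s0 u \<subseteq> S'")
          case True
          then have "S' \<in> A u" using S' unfolding A_def by auto
          then have "f u (S u) \<le> f u S'" using S u by auto
          then show ?thesis using cur cS[OF u, of S'] div by linarith
        next
          case False
          then obtain v where v: "v \<in> P" "d u v = 1" "v \<notin> S'" unfolding s0_def by auto
          have sZ: "stretch Z P d (S(u := S')) u v = Z"
            by (rule stretch_Z[OF M u v(1) v(2)]) (use v in simp)
          have uv: "v \<in> P - {u}" using v m_vals[OF M u v(1)] by auto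
          have "Z \<le> (\<Sum>w\<in>P - {u}. stretch Z P d (S(u := S')) u w)"
            using member_le_sum[of v "P - {u}" "\<lambda>w. stretch Z P d (S(u := S')) u w"]
              uv sZ stretch_nonneg[OF M u _ Z0] fin by auto
          then have dev: "Z \<le> agent_cost Z \<alpha> P d (S(u := S')) u"
            unfolding agent_cost_def using a0
            by (smt (verit) mult_nonneg_nonneg of_nat_0_le_iff)
          have full: "P - {u} \<in> A u" unfolding A_def s0_def using u m_vals[OF M u] by fastforce
          have "f u (S u) \<le> f u (P - {u})" using S u full by auto
          also have "f u (P - {u}) = agent_cost Z \<alpha> P d (s0(u := P - {u})) u" unfolding f_def ..
          also have "\<dots> \<le> n * (1 + \<alpha>)"
          proof -
            have "(\<Sum>w\<in>P - {u}. stretch Z P d (s0(u := P - {u})) u w) \<le> (\<Sum>w\<in>P - {u}. 1)"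
              by (rule sum_mono) (use stretch_le1[OF M u] in auto)
            also have "\<dots> \<le> n" unfolding n_def using fin by (simp add: card_Diff_subset_Int)
            finally have s1: "(\<Sum>w\<in>P - {u}. stretch Z P d (s0(u := P - {u})) u w) \<le> n" .
            have "card (P - {u}) \<le> card P" using fin by (simp add: card_Diff1_le)
            then have "\<alpha> * real (card (P - {u})) \<le> \<alpha> * n" unfolding n_def using a0 by simp
            then show ?thesis unfolding agent_cost_def using s1 by (simp add: algebra_simps)
          qed
          finally show ?thesis using cur div dev Z by linarith
        qed
      qed
    qed
  qed
qed simp

end
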